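(* Let $n,r\ge1$. Then, on $\mathbb{R}^n$: (i) $\mathcal{S}_r^-\Lambda^0=\mathcal{S}_r\Lambda^0$; (ii) $\mathcal{S}_r^-\Lambda^n=\mathcal{S}_{r-1}\Lambda^n$; (iii) for $0\le k\le n$, $\mathcal{S}_r^-\Lambda^k+d\,\mathcal{S}_{r+1}\Lambda^{k-1}=\mathcal{S}_r\Lambda^k$.
   Context: Fix $n\ge1$. For a multi-index $\alpha\in\mathbb{N}^n$ and a subset $\sigma=\{\sigma(1)<\dots<\sigma(k)\}\subset\{1,\dots,n\}$, the form monomial is $x^\alpha dx_\sigma:=x_1^{\alpha_1}\cdots x_n^{\alpha_n}\,dx_{\sigma(1)}\wedge\cdots\wedge dx_{\sigma(k)}$, of degree $|\alpha|$. $\mathcal{H}_r\Lambda^k(\mathbb{R}^n)$ is the span of form monomials with $|\alpha|=r$, $|\sigma|=k$ (it is $0$ if $r<0$ or $k\notin\{0,\dots,n\}$), and $\mathcal{P}_r\Lambda^k:=\bigoplus_{j=0}^r\mathcal{H}_j\Lambda^k$ ($=0$ if $r<0$). $d$ is the exterior derivative. The Koszul operator $\kappa$ is defined on monomials by $\kappa(x^\alpha dx_\sigma)=\sum_{i=1}^k(-1)^{i+1}x^\alpha x_{\sigma(i)}\,dx_{\sigma(1)}\wedge\cdots\wedge\widehat{dx_{\sigma(i)}}\wedge\cdots\wedge dx_{\sigma(k)}$ and extended linearly. The linear degree is $\mathrm{ldeg}(x^\alpha dx_\sigma):=\#\{i\notin\sigma:\alpha_i=1\}$, and $\mathcal{H}_{r,l}\Lambda^k$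 is the span of form monomials in $\mathcal{H}_r\Lambda^k$ with linear degree $\ge l$. Define $\mathcal{J}_r\Lambda^k:=\sum_{l\ge1}\kappa\,\mathcal{H}_{r+l-1,l}\Lambda^{k+1}$, the serendipity space $\mathcal{S}_r\Lambda^k:=\mathcal{P}_r\Lambda^k+\mathcal{J}_r\Lambda^k+d\,\mathcal{J}_{r+1}\Lambda^{k-1}$ (forms of degree $-1$ or $n+1$ are $0$), and for $r\ge1$ the trimmed serendipity space $\mathcal{S}_r^-\Lambda^k:=\mathcal{S}_{r-1}\Lambda^k+\kappa\,\mathcal{S}_{r-1}\Lambda^{k+1}$, all on $\mathbb{R}^n$. *)

theory Defs
  imports Complex_Main
begin

text \<open>Polynomial differential forms on R^n, represented by their coefficients
  with respect to the form monomials.  A monomial x^alpha dx_sigma is encoded as the pair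
  (alpha, sigma) with alpha :: nat => nat (exponents, supported in {1..n}) and
  sigma :: nat set (a subset of {1..n}); sigma is identified with its increasing
  enumeration.  A form is a finitely supported real coefficient function on monomials.\<close>

type_synonym mono = "(nat \<Rightarrow> nat) \<times> nat set"
type_synonym form = "mono \<Rightarrow> real"

definition fmono :: "mono \<Rightarrow> form" where
  "fmono m = (\<lambda>m'. if m' = m then 1 else 0)"

definition fzero :: form where "fzero = (\<lambda>m. 0)"

definition fadd :: "form \<Rightarrow> form \<Rightarrow> form" where
  "fadd a b = (\<lambda>m. a m + b m)"

definition lin_span :: "form set \<Rightarrow> form set" where
  "lin_span S = {w. \<exists>F c. finite F \<and> F \<subseteq> S \<and> w = (\<lambda>m. \<Sum>f\<in>F. c f * f m)}"

definition ssum :: "form set \<Rightarrow> form set \<Rightarrow> form set" (infixl "\<oplus>\<^sub>f" 65) where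
  "A \<oplus>\<^sub>f B = {fadd a b | a b. a \<in> A \<and> b \<in> B}"

definition lin_ext :: "(mono \<Rightarrow> form) \<Rightarrow> form \<Rightarrow> form" where
  "lin_ext f w = (\<lambda>m'. \<Sum>m\<in>{m. w m \<noteq> 0}. w m * f m m')"

text \<open>Koszul operator on a monomial: the i-th term (i counted from 1 in the
  increasing enumeration of sigma) carries the sign (-1)^(i+1) = (-1)^(number of
  elements of sigma below sigma(i)).\<close>
definition kappa_mono :: "mono \<Rightarrow> form" where
  "kappa_mono m = (case m of (a, s) \<Rightarrow> (\<lambda>(b, t).
     \<Sum>j\<in>s. if b = a(j := a j + 1) \<and> t = s - {j}
             then (-1) ^ card {l\<in>s. l < j} else 0))"

definition kappa :: "form \<Rightarrow> form" where
  "kappa = lin_ext kappa_mono"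

text \<open>Exterior derivative on a monomial: d(x^a dx_s) = sum_j a_j x^(a - e_j) dx_j /\ dx_s,
  and dx_j /\ dx_s = (-1)^(number of elements of s below j) dx_(s \<union> {j}) for j not in s.\<close>
definition d_mono :: "nat \<Rightarrow> mono \<Rightarrow> form" where
  "d_mono n m = (case m of (a, s) \<Rightarrow> (\<lambda>(b, t).
     \<Sum>j\<in>{1..n} - s. if 1 \<le> a j \<and> b = a(j := a j - 1) \<and> t = insert j s
             then of_nat (a j) * (-1) ^ card {l\<in>s. l < j} else 0))"

definition dext :: "nat \<Rightarrow> form \<Rightarrow> form" where
  "dext n = lin_ext (d_mono n)"

definition fmonos :: "nat \<Rightarrow> nat \<Rightarrow> int \<Rightarrow> mono set" where
  "fmonos n r k = {(a, s). (\<forall>i. a i \<noteq> 0 \<longrightarrow> i \<in> {1..n}) \<and> s \<subseteq> {1..n}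
      \<and> int (card s) = k \<and> (\<Sum>i\<in>{1..n}. a i) = r}"

definition ldeg :: "nat \<Rightarrow> mono \<Rightarrow> nat" where
  "ldeg n m = (case m of (a, s) \<Rightarrow> card {i\<in>{1..n}. i \<notin> s \<and> a i = 1})"

definition HH :: "nat \<Rightarrow> nat \<Rightarrow> int \<Rightarrow> form set" where
  "HH n r k = lin_span (fmono ` fmonos n r k)"

definition HHl :: "nat \<Rightarrow> nat \<Rightarrow> nat \<Rightarrow> int \<Rightarrow> form set" where
  "HHl n r l k = lin_span (fmono ` {m \<in> fmonos n r k. l \<le> ldeg n m})"

definition PP :: "nat \<Rightarrow> nat \<Rightarrow> int \<Rightarrow> form set" where
  "PP n r k = lin_span (\<Union>j\<in>{0..r}. HH n j k)"

definition JJ :: "nat \<Rightarrow> nat \<Rightarrow> int \<Rightarrow> form set" where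
  "JJ n r k = lin_span (\<Union>l\<in>{1..}. kappa ` HHl n (r + l - 1) l (k + 1))"

definition SS :: "nat \<Rightarrow> nat \<Rightarrow> int \<Rightarrow> form set" where
  "SS n r k = PP n r k \<oplus>\<^sub>f JJ n r k \<oplus>\<^sub>f dext n ` JJ n (r + 1) (k - 1)"

text \<open>Trimmed serendipity space (meant for r >= 1).\<close>
definition SSm :: "nat \<Rightarrow> nat \<Rightarrow> int \<Rightarrow> form set" where
  "SSm n r k = SS n (r - 1) k \<oplus>\<^sub>f kappa ` SS n (r - 1) (k + 1)"

end

theory Submission
  imports Defs
begin


definition fs :: "form \<Rightarrow> bool" where "fs w = finite {m. w m \<noteq> 0}"
definition scal :: "real \<Rightarrow> form \<Rightarrow> form" where "scal c w = (\<lambda>m. c * w m)"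
definition sub :: "form set \<Rightarrow> bool" where
  "sub U = (fzero \<in> U \<and> (\<forall>a\<in>U. \<forall>b\<in>U. fadd a b \<in> U) \<and> (\<forall>c. \<forall>a\<in>U. scal c a \<in> U) \<and> (\<forall>a\<in>U. fs a))"
definition lin :: "(form \<Rightarrow> form) \<Rightarrow> bool" where
  "lin L = ((\<forall>a b. fs a \<longrightarrow> fs b \<longrightarrow> L (fadd a b) = fadd (L a) (L b)) \<and>
     (\<forall>c a. fs a \<longrightarrow> L (scal c a) = scal c (L a)) \<and> (\<forall>a. fs a \<longrightarrow> fs (L a)))"

lemma fs_zero[simp]: "fs fzero" by (simp add: fs_def fzero_def)
lemma fs_add: "fs a \<Longrightarrow> fs b \<Longrightarrow> fs (fadd a b)"
  unfolding fs_def fadd_def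
  by (rule finite_subset[of _ "{m. a m \<noteq> 0} \<union> {m. b m \<noteq> 0}"]) auto
lemma fs_scal: "fs a \<Longrightarrow> fs (scal c a)"
  unfolding fs_def scal_def by (rule finite_subset[of _ "{m. a m \<noteq> 0}"]) auto
lemma fs_fmono[simp]: "fs (fmono m)"
  unfolding fs_def fmono_def by (rule finite_subset[of _ "{m}"]) auto

lemma fs_sum: "finite I \<Longrightarrow> (\<forall>i\<in>I. fs (g i)) \<Longrightarrow> fs (\<lambda>x. \<Sum>i\<in>I. c i * g i x)"
proof (induction I rule: finite_induct)
  case empty then show ?case by (simp add: fs_def)
next
  case (insert i I)
  have "(\<lambda>x. \<Sum>i\<in>insert i I. c i * g i x) = fadd (scal (c i) (g i)) (\<lambda>x. \<Sum>i\<in>I. c i * g i x)"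
    using insert by (simp add: fadd_def scal_def)
  then show ?case using insert fs_add fs_scal by simp
qed

lemma fs_sum_fmono: "fs (\<lambda>x. \<Sum>i\<in>I. c i * fmono (g i) x)"
proof (cases "finite I")
  case True then show ?thesis by (intro fs_sum) auto
next
  case False then show ?thesis by (simp add: fs_def)
qed

lemma sub_zero: "sub U \<Longrightarrow> fzero \<in> U" by (simp add: sub_def)
lemma sub_add: "sub U \<Longrightarrow> a \<in> U \<Longrightarrow> b \<in> U \<Longrightarrow> fadd a b \<in> U" by (simp add: sub_def)
lemma sub_scal: "sub U \<Longrightarrow> a \<in> U \<Longrightarrow> scal c a \<in> U" by (simp add: sub_def)
lemma sub_fs: "sub U \<Longrightarrow> a \<in> U \<Longrightarrow> fs a" by (simp add: sub_def)

lemma sub_comb: assumes U: "sub U" shows "finite I \<Longrightarrow> (\<forall>i\<in>I. c i \<noteq> 0 \<longrightarrow> g i \<in> U) \<Longrightarrow> (\<lambda>x. \<Sum>i\<in>I. c i * g i x) \<in> U"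
proof (induction I rule: finite_induct)
  case empty then show ?case using sub_zero[OF U] by (simp add: fzero_def)
next
  case (insert i I)
  have e: "(\<lambda>x. \<Sum>i\<in>insert i I. c i * g i x) = fadd (scal (c i) (g i)) (\<lambda>x. \<Sum>i\<in>I. c i * g i x)"
    using insert(1,2) by (simp add: fadd_def scal_def)
  show ?case
  proof (cases "c i = 0")
    case True
    have "(\<lambda>x. \<Sum>i\<in>insert i I. c i * g i x) = (\<lambda>x. \<Sum>i\<in>I. c i * g i x)"
      using insert True by simp
    then show ?thesis using insert by simp
  next
    case False
    then show ?thesis unfolding e using insert U by (intro sub_add sub_scal) auto
  qed
qed

lemma in_span: "finite F \<Longrightarrow> F \<subseteq> G \<Longrightarrow> (\<lambda>m. \<Sum>f\<in>F. c f * f m) \<in> lin_span G"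
  unfolding lin_span_def by blast

lemma span_zero: "fzero \<in> lin_span G"
proof -
  have "fzero = (\<lambda>m. \<Sum>f\<in>{}. (\<lambda>_. 0) f * f m)" by (simp add: fzero_def)
  then show ?thesis using in_span[of "{}" G] by simp
qed

lemma span_add: assumes "a \<in> lin_span G" "b \<in> lin_span G" shows "fadd a b \<in> lin_span G"
proof -
  obtain F1 c1 where h1: "finite F1" "F1 \<subseteq> G" "a = (\<lambda>m. \<Sum>f\<in>F1. c1 f * f m)"
    using assms(1) unfolding lin_span_def by blast
  obtain F2 c2 where h2: "finite F2" "F2 \<subseteq> G" "b = (\<lambda>m. \<Sum>f\<in>F2. c2 f * f m)"
    using assms(2) unfolding lin_span_def by blast
  define c where "c f = (if f \<in> F1 then c1 f else 0) + (if f \<in> F2 then c2 f else 0)" for f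
  have "fadd a b = (\<lambda>m. \<Sum>f\<in>F1 \<union> F2. c f * f m)"
  proof
    fix m
    have 1: "(\<Sum>f\<in>F1 \<union> F2. (if f \<in> F1 then c1 f else 0) * f m) = (\<Sum>f\<in>F1. c1 f * f m)"
      by (rule sum.mono_neutral_cong_right) (simp_all add: h1(1) h2(1))
    have 2: "(\<Sum>f\<in>F1 \<union> F2. (if f \<in> F2 then c2 f else 0) * f m) = (\<Sum>f\<in>F2. c2 f * f m)"
      by (rule sum.mono_neutral_cong_right) (simp_all add: h1(1) h2(1))
    have "(\<Sum>f\<in>F1 \<union> F2. c f * f m) = (\<Sum>f\<in>F1. c1 f * f m) + (\<Sum>f\<in>F2. c2 f * f m)"
      unfolding c_def distrib_right sum.distrib 1 2 ..
    then show "fadd a b m = (\<Sum>f\<in>F1 \<union> F2. c f * f m)"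
      unfolding fadd_def h1(3) h2(3) by simp
  qed
  moreover have "(\<lambda>m. \<Sum>f\<in>F1 \<union> F2. c f * f m) \<in> lin_span G"
    by (rule in_span) (use h1 h2 in blast)+
  ultimately show ?thesis by simp
qed

lemma span_scal: assumes "a \<in> lin_span G" shows "scal c a \<in> lin_span G"
proof -
  obtain F d where h: "finite F" "F \<subseteq> G" "a = (\<lambda>m. \<Sum>f\<in>F. d f * f m)"
    using assms unfolding lin_span_def by blast
  have "scal c a = (\<lambda>m. \<Sum>f\<in>F. (c * d f) * f m)"
    unfolding h(3) scal_def by (simp add: sum_distrib_left mult.assoc)
  then show ?thesis using in_span[OF h(1,2)] by simp
qed

lemma span_fs: assumes G: "\<forall>g\<in>G. fs g" and "a \<in> lin_span G" shows "fs a"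
proof -
  obtain F d where h: "finite F" "F \<subseteq> G" "a = (\<lambda>m. \<Sum>f\<in>F. d f * f m)"
    using assms(2) unfolding lin_span_def by blast
  have "\<forall>f\<in>F. fs f" using h(2) G by blast
  then show ?thesis unfolding h(3) by (rule fs_sum[OF h(1)])
qed

lemma span_sub: assumes G: "\<forall>g\<in>G. fs g" shows "sub (lin_span G)"
  unfolding sub_def
proof (intro conjI ballI allI)
  show "fzero \<in> lin_span G" by (rule span_zero)
  show "fadd a b \<in> lin_span G" if "a \<in> lin_span G" "b \<in> lin_span G" for a b using that by (rule span_add)
  show "scal c a \<in> lin_span G" if "a \<in> lin_span G" for a c using that by (rule span_scal)
  show "fs a" if "a \<in> lin_span G" for a using G that by (rule span_fs)
qed

lemma span_least: assumes "sub U" "G \<subseteq> U" shows "lin_span G \<subseteq> U"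
proof
  fix w assume "w \<in> lin_span G"
  then obtain F c where h: "finite F" "F \<subseteq> G" "w = (\<lambda>m. \<Sum>f\<in>F. c f * f m)" unfolding lin_span_def by blast
  have "\<forall>f\<in>F. c f \<noteq> 0 \<longrightarrow> f \<in> U" using h(2) assms(2) by blast
  from sub_comb[OF assms(1) h(1) this] show "w \<in> U" unfolding h(3) .
qed

lemma span_inc: assumes "g \<in> G" shows "g \<in> lin_span G"
proof -
  have "g = (\<lambda>m. \<Sum>f\<in>{g}. (\<lambda>_. 1) f * f m)" by simp
  moreover have "(\<lambda>m. \<Sum>f\<in>{g}. (\<lambda>_. 1) f * f m) \<in> lin_span G" by (rule in_span) (use assms in auto)
  ultimately show ?thesis by simp
qed

lemma fadd_ac: "fadd (fadd a b) (fadd c d) = fadd (fadd a c) (fadd b d)"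
  unfolding fadd_def by (rule ext) simp
lemma scal_fadd: "scal c (fadd a b) = fadd (scal c a) (scal c b)"
  unfolding fadd_def scal_def by (rule ext) (simp add: algebra_simps)
lemma scal_scal: "scal c (scal d a) = scal (c * d) a"
  unfolding scal_def by (rule ext) simp
lemma fadd_zero[simp]: "fadd a fzero = a" "fadd fzero a = a" unfolding fadd_def fzero_def by simp_all

lemma ssum_sub: assumes A: "sub A" and B: "sub B" shows "sub (A \<oplus>\<^sub>f B)"
proof -
  have z: "fzero \<in> A \<oplus>\<^sub>f B"
  proof -
    have "fzero = fadd fzero fzero" by simp
    then show ?thesis unfolding ssum_def using sub_zero[OF A] sub_zero[OF B] by blast
  qed
  have p: "fadd x y \<in> A \<oplus>\<^sub>f B" if X: "x \<in> A \<oplus>\<^sub>f B" and Y: "y \<in> A \<oplus>\<^sub>f B" for x y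
  proof -
    obtain a b where h1: "x = fadd a b" "a\<in>A" "b\<in>B" using X unfolding ssum_def by blast
    obtain a' b' where h2: "y = fadd a' b'" "a'\<in>A" "b'\<in>B" using Y unfolding ssum_def by blast
    have "fadd x y = fadd (fadd a a') (fadd b b')" unfolding h1(1) h2(1) by (rule fadd_ac)
    moreover have "fadd a a' \<in> A" using sub_add[OF A h1(2) h2(2)] .
    moreover have "fadd b b' \<in> B" using sub_add[OF B h1(3) h2(3)] .
    ultimately show ?thesis unfolding ssum_def by blast
  qed
  have s: "scal c x \<in> A \<oplus>\<^sub>f B" if X: "x \<in> A \<oplus>\<^sub>f B" for x c
  proof -
    obtain a b where h1: "x = fadd a b" "a\<in>A" "b\<in>B" using X unfolding ssum_def by blast
    have "scal c x = fadd (scal c a) (scal c b)" unfolding h1(1) by (rule scal_fadd)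
    moreover have "scal c a \<in> A" using sub_scal[OF A h1(2)] .
    moreover have "scal c b \<in> B" using sub_scal[OF B h1(3)] .
    ultimately show ?thesis unfolding ssum_def by blast
  qed
  have f: "fs x" if X: "x \<in> A \<oplus>\<^sub>f B" for x
  proof -
    obtain a b where h1: "x = fadd a b" "a\<in>A" "b\<in>B" using X unfolding ssum_def by blast
    then show ?thesis using fs_add sub_fs[OF A] sub_fs[OF B] by simp
  qed
  show ?thesis unfolding sub_def using z p s f by blast
qed

lemma ssum_least: "sub U \<Longrightarrow> A \<subseteq> U \<Longrightarrow> B \<subseteq> U \<Longrightarrow> A \<oplus>\<^sub>f B \<subseteq> U"
  unfolding ssum_def using sub_add by blast
lemma ssum_inc1: assumes "fzero \<in> B" shows "A \<subseteq> A \<oplus>\<^sub>f B"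
proof
  fix a assume "a \<in> A"
  moreover have "a = fadd a fzero" by simp
  ultimately show "a \<in> A \<oplus>\<^sub>f B" unfolding ssum_def using assms by blast
qed
lemma ssum_inc2: assumes "fzero \<in> A" shows "B \<subseteq> A \<oplus>\<^sub>f B"
proof
  fix b assume "b \<in> B"
  moreover have "b = fadd fzero b" by simp
  ultimately show "b \<in> A \<oplus>\<^sub>f B" unfolding ssum_def using assms by blast
qed
lemma ssum_zero: "A \<oplus>\<^sub>f {fzero} = A"
proof
  show "A \<oplus>\<^sub>f {fzero} \<subseteq> A"
  proof
    fix w assume "w \<in> A \<oplus>\<^sub>f {fzero}"
    then obtain a b where "a \<in> A" "b \<in> {fzero}" "w = fadd a b" unfolding ssum_def by blast
    then show "w \<in> A" by simp
  qed
  show "A \<subseteq> A \<oplus>\<^sub>f {fzero}" by (rule ssum_inc1) simp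
qed

lemma lin_zero: "lin L \<Longrightarrow> L fzero = fzero"
proof -
  assume L: "lin L"
  have "fzero = scal 0 fzero" by (simp add: scal_def fzero_def)
  moreover have "L (scal 0 fzero) = scal 0 (L fzero)" using L by (simp add: lin_def)
  ultimately have "L fzero = scal 0 (L fzero)" by simp
  then show ?thesis by (simp add: scal_def fzero_def)
qed
lemma lin_add: "lin L \<Longrightarrow> fs a \<Longrightarrow> fs b \<Longrightarrow> L (fadd a b) = fadd (L a) (L b)" by (simp add: lin_def)
lemma lin_scal: "lin L \<Longrightarrow> fs a \<Longrightarrow> L (scal c a) = scal c (L a)" by (simp add: lin_def)
lemma lin_fs: "lin L \<Longrightarrow> fs a \<Longrightarrow> fs (L a)" by (simp add: lin_def)

lemma lin_sum: assumes L: "lin L" shows "finite I \<Longrightarrow> (\<forall>i\<in>I. fs (g i)) \<Longrightarrow>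
   L (\<lambda>x. \<Sum>i\<in>I. c i * g i x) = (\<lambda>x. \<Sum>i\<in>I. c i * L (g i) x)"
proof (induction I rule: finite_induct)
  case empty then show ?case using lin_zero[OF L] by (simp add: fzero_def)
next
  case (insert i I)
  have e: "(\<lambda>x. \<Sum>i\<in>insert i I. c i * g i x) = fadd (scal (c i) (g i)) (\<lambda>x. \<Sum>i\<in>I. c i * g i x)"
    using insert(1,2) by (simp add: fadd_def scal_def)
  have "L (fadd (scal (c i) (g i)) (\<lambda>x. \<Sum>i\<in>I. c i * g i x))
      = fadd (scal (c i) (L (g i))) (\<lambda>x. \<Sum>i\<in>I. c i * L (g i) x)"
  proof -
    have fsg: "fs (g i)" "\<forall>j\<in>I. fs (g j)" using insert(4) by auto
    have IH: "L (\<lambda>x. \<Sum>i\<in>I. c i * g i x) = (\<lambda>x. \<Sum>i\<in>I. c i * L (g i) x)" using insert(3) fsg(2) by blast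
    have fsI: "fs (\<lambda>x. \<Sum>i\<in>I. c i * g i x)" using fs_sum[OF insert(1) fsg(2)] .
    have "L (fadd (scal (c i) (g i)) (\<lambda>x. \<Sum>i\<in>I. c i * g i x)) = fadd (L (scal (c i) (g i))) (L (\<lambda>x. \<Sum>i\<in>I. c i * g i x))"
      by (rule lin_add[OF L fs_scal[OF fsg(1)] fsI])
    also have "L (scal (c i) (g i)) = scal (c i) (L (g i))" by (rule lin_scal[OF L fsg(1)])
    finally show ?thesis unfolding IH .
  qed
  moreover have "(\<lambda>x. \<Sum>i\<in>insert i I. c i * L (g i) x) = fadd (scal (c i) (L (g i))) (\<lambda>x. \<Sum>i\<in>I. c i * L (g i) x)"
    using insert(1,2) by (simp add: fadd_def scal_def)
  ultimately show ?case unfolding e by simp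
qed

lemma lin_comp: assumes "lin L1" "lin L2" shows "lin (\<lambda>w. L1 (L2 w))"
  unfolding lin_def using assms lin_add lin_scal lin_fs by (simp add: fs_scal)
lemma lin_plus: assumes "lin L1" "lin L2" shows "lin (\<lambda>w. fadd (L1 w) (L2 w))"
  unfolding lin_def using assms lin_add lin_scal lin_fs fs_add by (simp add: fadd_ac scal_fadd)
lemma lin_scalmap: "lin (scal c)"
  unfolding lin_def using fs_scal by (simp add: scal_fadd scal_scal mult.commute)
lemma lin_zeromap: "lin (\<lambda>w. fzero)"
  unfolding lin_def by (auto simp: fadd_def scal_def fzero_def fs_def)

lemma sub_image: assumes L: "lin L" and A: "sub A" shows "sub (L ` A)"
proof -
  have "L fzero = fzero" using lin_zero L by blast
  then have 1: "fzero \<in> L ` A" using A sub_zero by force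
  have 2: "fadd x y \<in> L ` A" if "x \<in> L ` A" "y \<in> L ` A" for x y
  proof -
    from that(1) obtain a where "a \<in> A" "x = L a" by blast
    moreover from that(2) obtain b where "b \<in> A" "y = L b" by blast
    ultimately have "a \<in> A" "b \<in> A" "x = L a" "y = L b" by auto
    then have "L (fadd a b) = fadd x y" using L A lin_add sub_fs by simp
    moreover have "fadd a b \<in> A" using A \<open>a \<in> A\<close> \<open>b \<in> A\<close> sub_add by blast
    ultimately show ?thesis by (metis image_eqI)
  qed
  have 3: "scal c x \<in> L ` A" if "x \<in> L ` A" for x c
  proof -
    from that obtain a where "a \<in> A" "x = L a" by blast
    then have "L (scal c a) = scal c x" using L A lin_scal sub_fs by simp
    moreover have "scal c a \<in> A" using A \<open>a \<in> A\<close> sub_scal by blast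
    ultimately show ?thesis by (metis image_eqI)
  qed
  have 4: "fs x" if "x \<in> L ` A" for x
    using that L A lin_fs sub_fs by blast
  show ?thesis unfolding sub_def using 1 2 3 4 by blast
qed

lemma sub_pre: assumes L: "lin L" and U: "sub U" shows "sub {w. fs w \<and> L w \<in> U}"
proof -
  have 1: "fzero \<in> {w. fs w \<and> L w \<in> U}" using lin_zero[OF L] sub_zero[OF U] by simp
  have 2: "fadd x y \<in> {w. fs w \<and> L w \<in> U}" if "x \<in> {w. fs w \<and> L w \<in> U}" "y \<in> {w. fs w \<and> L w \<in> U}" for x y
    using that lin_add[OF L] sub_add[OF U] fs_add by simp
  have 3: "scal c x \<in> {w. fs w \<and> L w \<in> U}" if "x \<in> {w. fs w \<and> L w \<in> U}" for x c
    using that lin_scal[OF L] sub_scal[OF U] fs_scal by simp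
  show ?thesis unfolding sub_def using 1 2 3 by blast
qed

lemma sub_eq: assumes L1: "lin L1" and L2: "lin L2" shows "sub {w. fs w \<and> L1 w = L2 w}"
proof -
  have 1: "fzero \<in> {w. fs w \<and> L1 w = L2 w}" using lin_zero[OF L1] lin_zero[OF L2] by simp
  have 2: "fadd x y \<in> {w. fs w \<and> L1 w = L2 w}" if "x \<in> {w. fs w \<and> L1 w = L2 w}" "y \<in> {w. fs w \<and> L1 w = L2 w}" for x y
    using that lin_add[OF L1] lin_add[OF L2] fs_add by simp
  have 3: "scal c x \<in> {w. fs w \<and> L1 w = L2 w}" if "x \<in> {w. fs w \<and> L1 w = L2 w}" for x c
    using that lin_scal[OF L1] lin_scal[OF L2] fs_scal by simp
  show ?thesis unfolding sub_def using 1 2 3 by blast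
qed

lemma image_span: "lin L \<Longrightarrow> sub U \<Longrightarrow> (\<forall>g\<in>G. fs g) \<Longrightarrow> (\<forall>g\<in>G. L g \<in> U) \<Longrightarrow> w \<in> lin_span G \<Longrightarrow> L w \<in> U"
  using span_least[OF sub_pre[of L U], of G] by blast

lemma eq_span: "lin L1 \<Longrightarrow> lin L2 \<Longrightarrow> (\<forall>g\<in>G. fs g) \<Longrightarrow> (\<forall>g\<in>G. L1 g = L2 g) \<Longrightarrow> w \<in> lin_span G \<Longrightarrow> L1 w = L2 w"
  using span_least[OF sub_eq[of L1 L2], of G] by blast

lemma image_ssum: assumes "lin L" "sub U" "sub A" "sub B" "\<forall>a\<in>A. L a \<in> U" "\<forall>b\<in>B. L b \<in> U" "w \<in> A \<oplus>\<^sub>f B" shows "L w \<in> U"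
proof -
  obtain a b where "a \<in> A" "b \<in> B" "w = fadd a b" using assms(7) unfolding ssum_def by blast
  then have "L w = fadd (L a) (L b)" using assms(1,3,4) lin_add sub_fs by blast
  moreover have "L a \<in> U" "L b \<in> U" using assms(5,6) \<open>a \<in> A\<close> \<open>b \<in> B\<close> by auto
  ultimately show ?thesis using assms(2) sub_add by simp
qed



definition eps :: "nat set \<Rightarrow> nat \<Rightarrow> real" where "eps s j = (-1) ^ card {l\<in>s. l < j}"

lemma eps_sq[simp]: "eps s j * eps s j = 1"
  unfolding eps_def by (simp add: power_mult_distrib[symmetric])

lemma eps_insert_self: "eps (insert j s) j = eps s j"
  unfolding eps_def by (rule arg_cong[where f="\<lambda>k. (-1) ^ card k"]) auto

lemma eps_remove_self: "eps (s - {i}) i = eps s i"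
  unfolding eps_def by (rule arg_cong[where f="\<lambda>k. (-1) ^ card k"]) auto

lemma eps_ins_less: "i < j \<Longrightarrow> eps (insert j s) i = eps s i"
  unfolding eps_def by (rule arg_cong[where f="\<lambda>k. (-1) ^ card k"]) auto

lemma eps_rem_less: "i < j \<Longrightarrow> eps (s - {j}) i = eps s i"
  unfolding eps_def by (rule arg_cong[where f="\<lambda>k. (-1) ^ card k"]) auto

lemma eps_ins_greater: assumes "finite s" "j \<notin> s" "j < i" shows "eps (insert j s) i = - eps s i"
proof -
  have "{l\<in>insert j s. l < i} = insert j {l\<in>s. l < i}" using assms by auto
  moreover have "j \<notin> {l\<in>s. l < i}" using assms by auto
  moreover have "finite {l\<in>s. l < i}" using assms by auto
  ultimately show ?thesis unfolding eps_def by simp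
qed

lemma eps_rem_greater: assumes "finite s" "i \<in> s" "i < j" shows "eps s j = - eps (s - {i}) j"
proof -
  have "{l\<in>s. l < j} = insert i {l\<in>s - {i}. l < j}" using assms by auto
  moreover have "i \<notin> {l\<in>s - {i}. l < j}" by auto
  moreover have "finite {l\<in>s - {i}. l < j}" using assms by auto
  ultimately show ?thesis unfolding eps_def by simp
qed

lemma eps_cross: assumes "finite s" "i \<in> s" "j \<notin> s"
  shows "eps s j * eps (insert j s) i = - (eps s i * eps (s - {i}) j)"
proof (cases "i < j")
  case True
  then show ?thesis using eps_ins_less[OF True] eps_rem_greater[OF assms(1,2) True] by simp
next
  case False
  then have "j < i" using assms by (metis linorder_neqE_nat)
  moreover have "eps (s - {i}) j = eps s j" using eps_rem_less[OF \<open>j < i\<close>] .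
  ultimately show ?thesis using eps_ins_greater[OF assms(1,3)] by simp
qed

lemma eps_kk_less: assumes "finite s" "i \<in> s" "j \<in> s" "i < j"
  shows "eps s i * eps (s - {i}) j = - (eps s j * eps (s - {j}) i)"
  using eps_rem_less[OF assms(4)] eps_rem_greater[OF assms(1,2,4)] by simp

lemma eps_kk: assumes "finite s" "i \<in> s" "j \<in> s" "i \<noteq> j"
  shows "eps s i * eps (s - {i}) j = - (eps s j * eps (s - {j}) i)"
proof (cases "i < j")
  case True then show ?thesis using eps_kk_less assms by blast
next
  case False then have "j < i" using assms by simp
  then show ?thesis using eps_kk_less[OF assms(1,3,2)] by simp
qed

lemma eps_dd_less: assumes "finite s" "i \<notin> s" "j \<notin> s" "i < j"
  shows "eps s j * eps (insert j s) i = - (eps s i * eps (insert i s) j)"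
  using eps_ins_less[OF assms(4)] eps_ins_greater[OF assms(1,2,4)] by simp

lemma eps_dd: assumes "finite s" "i \<notin> s" "j \<notin> s" "i \<noteq> j"
  shows "eps s j * eps (insert j s) i = - (eps s i * eps (insert i s) j)"
proof (cases "i < j")
  case True then show ?thesis using eps_dd_less assms by blast
next
  case False then have "j < i" using assms by simp
  then show ?thesis using eps_dd_less[OF assms(1,3,2)] by simp
qed

lemma kappa_mono_eq: "kappa_mono (a, s) = (\<lambda>x. \<Sum>j\<in>s. eps s j * fmono (a(j := a j + 1), s - {j}) x)"
proof (rule ext)
  fix x :: mono
  obtain b t where x: "x = (b, t)" by (cases x)
  show "kappa_mono (a, s) x = (\<Sum>j\<in>s. eps s j * fmono (a(j := a j + 1), s - {j}) x)"
    unfolding x kappa_mono_def fmono_def eps_def prod.case by (intro sum.cong) auto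
qed

lemma d_mono_eq: "d_mono n (a, s) = (\<lambda>x. \<Sum>j\<in>{1..n} - s. (of_nat (a j) * eps s j) * fmono (a(j := a j - 1), insert j s) x)"
proof (rule ext)
  fix x :: mono
  obtain b t where x: "x = (b, t)" by (cases x)
  show "d_mono n (a, s) x = (\<Sum>j\<in>{1..n} - s. (of_nat (a j) * eps s j) * fmono (a(j := a j - 1), insert j s) x)"
    unfolding x d_mono_def fmono_def eps_def prod.case by (intro sum.cong) auto
qed

lemma fs_kappa_mono: "fs (kappa_mono m)"
  by (cases m) (simp only: kappa_mono_eq fs_sum_fmono)
lemma fs_d_mono: "fs (d_mono n m)"
  by (cases m) (simp only: d_mono_eq fs_sum_fmono)

lemma lin_ext_eq: assumes "fs w" "finite S" "{m. w m \<noteq> 0} \<subseteq> S"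
  shows "lin_ext f w = (\<lambda>m'. \<Sum>m\<in>S. w m * f m m')"
proof (rule ext)
  fix m'
  show "lin_ext f w m' = (\<Sum>m\<in>S. w m * f m m')"
    unfolding lin_ext_def by (rule sum.mono_neutral_left) (use assms in auto)
qed

lemma lin_ext_lin: assumes F: "\<And>m. fs (f m)" shows "lin (lin_ext f)"
  unfolding lin_def
proof (intro conjI allI impI)
  fix a b assume a: "fs a" and b: "fs b"
  let ?S = "{m. a m \<noteq> 0} \<union> {m. b m \<noteq> 0}"
  have fin: "finite ?S" using a b by (simp add: fs_def)
  have 1: "lin_ext f (fadd a b) = (\<lambda>m'. \<Sum>m\<in>?S. fadd a b m * f m m')"
    by (rule lin_ext_eq[OF fs_add[OF a b] fin]) (auto simp: fadd_def)
  have 2: "lin_ext f a = (\<lambda>m'. \<Sum>m\<in>?S. a m * f m m')" by (rule lin_ext_eq[OF a fin]) auto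
  have 3: "lin_ext f b = (\<lambda>m'. \<Sum>m\<in>?S. b m * f m m')" by (rule lin_ext_eq[OF b fin]) auto
  show "lin_ext f (fadd a b) = fadd (lin_ext f a) (lin_ext f b)"
    unfolding 1 2 3 by (rule ext) (simp add: fadd_def distrib_right sum.distrib)
next
  fix c and a :: form assume a: "fs a"
  let ?S = "{m. a m \<noteq> 0}"
  have fin: "finite ?S" using a by (simp add: fs_def)
  have 1: "lin_ext f (scal c a) = (\<lambda>m'. \<Sum>m\<in>?S. scal c a m * f m m')"
    by (rule lin_ext_eq[OF fs_scal[OF a] fin]) (auto simp: scal_def)
  have 2: "lin_ext f a = (\<lambda>m'. \<Sum>m\<in>?S. a m * f m m')" by (rule lin_ext_eq[OF a fin]) auto
  show "lin_ext f (scal c a) = scal c (lin_ext f a)"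
    unfolding 1 2 by (rule ext) (simp add: scal_def sum_distrib_left mult.assoc)
next
  fix a :: form assume a: "fs a"
  let ?S = "{m. a m \<noteq> 0}"
  have fin: "finite ?S" using a by (simp add: fs_def)
  have "{m'. lin_ext f a m' \<noteq> 0} \<subseteq> (\<Union>m\<in>?S. {m'. f m m' \<noteq> 0})"
  proof
    fix m' assume "m' \<in> {m'. lin_ext f a m' \<noteq> 0}"
    then have "(\<Sum>m\<in>?S. a m * f m m') \<noteq> 0" unfolding lin_ext_def by simp
    then obtain m where "m \<in> ?S" "a m * f m m' \<noteq> 0" by (meson sum.neutral)
    then show "m' \<in> (\<Union>m\<in>?S. {m'. f m m' \<noteq> 0})" by (intro UN_I[of m]) simp_all
  qed
  moreover have "finite (\<Union>m\<in>?S. {m'. f m m' \<noteq> 0})" using fin F by (simp add: fs_def)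
  ultimately show "fs (lin_ext f a)" unfolding fs_def by (rule finite_subset)
qed

lemma lin_kappa: "lin kappa"
  unfolding kappa_def by (rule lin_ext_lin) (rule fs_kappa_mono)
lemma lin_dext: "lin (dext n)"
  unfolding dext_def by (rule lin_ext_lin) (rule fs_d_mono)

lemma lin_ext_fmono: "lin_ext f (fmono m) = f m"
proof -
  have "lin_ext f (fmono m) = (\<lambda>m'. \<Sum>x\<in>{m}. fmono m x * f x m')"
    by (rule lin_ext_eq[OF fs_fmono]) (auto simp: fmono_def split: if_splits)
  then show ?thesis by (simp add: fmono_def)
qed

lemma kappa_fmono: "kappa (fmono (a, s)) = (\<lambda>x. \<Sum>j\<in>s. eps s j * fmono (a(j := a j + 1), s - {j}) x)"
  unfolding kappa_def lin_ext_fmono kappa_mono_eq ..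
lemma dext_fmono: "dext n (fmono (a, s)) = (\<lambda>x. \<Sum>j\<in>{1..n} - s. (of_nat (a j) * eps s j) * fmono (a(j := a j - 1), insert j s) x)"
  unfolding dext_def lin_ext_fmono d_mono_eq ..



lemma antisym_double_sum:
  fixes H :: "nat \<Rightarrow> nat \<Rightarrow> real"
  assumes "\<And>i j. i \<in> s \<Longrightarrow> j \<in> s \<Longrightarrow> H j i = - H i j"
  shows "(\<Sum>i\<in>s. \<Sum>j\<in>s. H i j) = 0"
proof -
  have "(\<Sum>i\<in>s. \<Sum>j\<in>s. H i j) = (\<Sum>i\<in>s. \<Sum>j\<in>s. H j i)" by (rule sum.swap)
  also have "\<dots> = (\<Sum>i\<in>s. \<Sum>j\<in>s. - H i j)"
    by (rule sum.cong[OF refl], rule sum.cong[OF refl], rule assms) assumption+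
  also have "\<dots> = - (\<Sum>i\<in>s. \<Sum>j\<in>s. H i j)" by (simp add: sum_negf)
  finally show ?thesis by simp
qed

lemma kk_mono: assumes fin: "finite s" shows "kappa (kappa (fmono (a, s))) = fzero"
proof (rule ext)
  fix x
  have 1: "kappa (kappa (fmono (a, s))) = (\<lambda>x. \<Sum>i\<in>s. eps s i * kappa (fmono (a(i := a i + 1), s - {i})) x)"
    unfolding kappa_fmono[of a s] by (rule lin_sum[OF lin_kappa fin]) simp
  define H where "H i j = (if i \<noteq> j then eps s i * eps (s - {i}) j * fmono (a(i := a i + 1, j := a j + 1), s - {i} - {j}) x else 0)" for i j
  have 2: "eps s i * kappa (fmono (a(i := a i + 1), s - {i})) x = (\<Sum>j\<in>s. H i j)" if i: "i \<in> s" for i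
  proof -
    have "eps s i * kappa (fmono (a(i := a i + 1), s - {i})) x
       = (\<Sum>j\<in>s - {i}. eps s i * (eps (s - {i}) j * fmono ((a(i := a i + 1))(j := (a(i := a i + 1)) j + 1), s - {i} - {j}) x))"
      unfolding kappa_fmono by (simp add: sum_distrib_left)
    also have "\<dots> = (\<Sum>j\<in>s - {i}. H i j)"
      by (intro sum.cong refl) (auto simp: H_def)
    also have "\<dots> = (\<Sum>j\<in>s. H i j)"
      by (rule sum.mono_neutral_left) (use fin in \<open>auto simp: H_def\<close>)
    finally show ?thesis .
  qed
  have 3: "H j i = - H i j" if "i \<in> s" "j \<in> s" for i j
  proof (cases "i = j")
    case True then show ?thesis by (simp add: H_def)
  next
    case False
    have m: "a(j := a j + 1, i := a i + 1) = a(i := a i + 1, j := a j + 1)" by (rule fun_upd_twist) (use False in simp)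
    have t: "s - {j} - {i} = s - {i} - {j}" by auto
    have "eps s j * eps (s - {j}) i = - (eps s i * eps (s - {i}) j)"
      using eps_kk[OF fin that(1,2) False] by simp
    then show ?thesis using False unfolding H_def m t by simp
  qed
  have "kappa (kappa (fmono (a, s))) x = (\<Sum>i\<in>s. \<Sum>j\<in>s. H i j)"
    unfolding 1 using 2 by simp
  also have "\<dots> = 0" by (rule antisym_double_sum) (use 3 in blast)
  finally show "kappa (kappa (fmono (a, s))) x = fzero x" by (simp add: fzero_def)
qed

lemma dd_mono: assumes fin: "finite s" shows "dext n (dext n (fmono (a, s))) = fzero"
proof (rule ext)
  fix x
  let ?N = "{1..n} - s"
  have finN: "finite ?N" by simp
  have 1: "dext n (dext n (fmono (a, s))) = (\<lambda>x. \<Sum>j\<in>?N. (of_nat (a j) * eps s j) * dext n (fmono (a(j := a j - 1), insert j s)) x)"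
    unfolding dext_fmono[of n a s] by (rule lin_sum[OF lin_dext finN]) simp
  define H where "H j i = (if i \<noteq> j then (of_nat (a j) * eps s j) * (of_nat (a i) * eps (insert j s) i) * fmono (a(j := a j - 1, i := a i - 1), insert i (insert j s)) x else 0)" for i j
  have 2: "(of_nat (a j) * eps s j) * dext n (fmono (a(j := a j - 1), insert j s)) x = (\<Sum>i\<in>?N. H j i)" if j: "j \<in> ?N" for j
  proof -
    have e: "{1..n} - insert j s = ?N - {j}" by auto
    have "(of_nat (a j) * eps s j) * dext n (fmono (a(j := a j - 1), insert j s)) x
       = (\<Sum>i\<in>?N - {j}. (of_nat (a j) * eps s j) * ((of_nat ((a(j := a j - 1)) i) * eps (insert j s) i) * fmono ((a(j := a j - 1))(i := (a(j := a j - 1)) i - 1), insert i (insert j s)) x))"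
      unfolding dext_fmono e by (simp add: sum_distrib_left)
    also have "\<dots> = (\<Sum>i\<in>?N - {j}. H j i)"
      by (intro sum.cong refl) (auto simp: H_def)
    also have "\<dots> = (\<Sum>i\<in>?N. H j i)"
      by (rule sum.mono_neutral_left) (auto simp: H_def)
    finally show ?thesis .
  qed
  have 3: "H i j = - H j i" if "i \<in> ?N" "j \<in> ?N" for i j
  proof (cases "i = j")
    case True then show ?thesis by (simp add: H_def)
  next
    case False
    have m: "a(i := a i - 1, j := a j - 1) = a(j := a j - 1, i := a i - 1)" by (rule fun_upd_twist) (use False in simp)
    have t: "insert j (insert i s) = insert i (insert j s)" by auto
    have "eps s i * eps (insert i s) j = - (eps s j * eps (insert j s) i)"
      using eps_dd[OF fin _ _ False[symmetric]] that by simp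
    moreover have "H i j = (of_nat (a i) * of_nat (a j) * fmono (a(j := a j - 1, i := a i - 1), insert i (insert j s)) x) * (eps s i * eps (insert i s) j)"
      using False unfolding H_def m t by (simp add: algebra_simps)
    moreover have "H j i = (of_nat (a i) * of_nat (a j) * fmono (a(j := a j - 1, i := a i - 1), insert i (insert j s)) x) * (eps s j * eps (insert j s) i)"
      using False unfolding H_def by (simp add: algebra_simps)
    ultimately show ?thesis by simp
  qed
  have "dext n (dext n (fmono (a, s))) x = (\<Sum>j\<in>?N. \<Sum>i\<in>?N. H j i)"
    unfolding 1 using 2 by simp
  also have "\<dots> = 0" by (rule antisym_double_sum) (use 3 in blast)
  finally show "dext n (dext n (fmono (a, s))) x = fzero x" by (simp add: fzero_def)
qed



lemma eps_sq2[simp]: "eps s j * (eps s j * y) = y"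
  by (simp add: mult.assoc[symmetric])

lemma htpy_mono:
  assumes s: "s \<subseteq> {1..n}"
  shows "fadd (kappa (dext n (fmono (a, s)))) (dext n (kappa (fmono (a, s))))
       = scal (real (\<Sum>i\<in>{1..n}. a i) + real (card s)) (fmono (a, s))"
proof (rule ext)
  fix x
  let ?N = "{1..n} - s"
  have fin: "finite s" using s finite_subset by blast
  have finN: "finite ?N" by simp
  define fm where "fm = fmono (a, s) x"
  define F where "F i j = fmono (a(j := a j - 1, i := a i + 1), insert j s - {i}) x" for i j
  define A where "A j i = (of_nat (a j) * F i j) * (eps s j * eps (insert j s) i)" for j i
  define B where "B i j = (of_nat (a j) * F i j) * (eps s i * eps (s - {i}) j)" for i j
  have KD1: "kappa (dext n (fmono (a, s))) = (\<lambda>x. \<Sum>j\<in>?N. (of_nat (a j) * eps s j) * kappa (fmono (a(j := a j - 1), insert j s)) x)"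
    unfolding dext_fmono[of n a s] by (rule lin_sum[OF lin_kappa finN]) simp
  have KD2: "(of_nat (a j) * eps s j) * kappa (fmono (a(j := a j - 1), insert j s)) x = of_nat (a j) * fm + (\<Sum>i\<in>s. A j i)"
    if j: "j \<in> ?N" for j
  proof -
    have js: "j \<notin> s" using j by simp
    have "kappa (fmono (a(j := a j - 1), insert j s)) x
       = eps (insert j s) j * fmono ((a(j := a j - 1))(j := (a(j := a j - 1)) j + 1), insert j s - {j}) x
         + (\<Sum>i\<in>s. eps (insert j s) i * fmono ((a(j := a j - 1))(i := (a(j := a j - 1)) i + 1), insert j s - {i}) x)"
      unfolding kappa_fmono using fin js by (simp add: sum.insert)
    also have "(\<Sum>i\<in>s. eps (insert j s) i * fmono ((a(j := a j - 1))(i := (a(j := a j - 1)) i + 1), insert j s - {i}) x)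
       = (\<Sum>i\<in>s. eps (insert j s) i * F i j)"
      by (intro sum.cong refl) (use js in \<open>auto simp: F_def\<close>)
    finally have e1: "kappa (fmono (a(j := a j - 1), insert j s)) x
       = eps (insert j s) j * fmono ((a(j := a j - 1))(j := (a(j := a j - 1)) j + 1), insert j s - {j}) x
         + (\<Sum>i\<in>s. eps (insert j s) i * F i j)" .
    have e2: "(of_nat (a j) * eps s j) * (eps (insert j s) j * fmono ((a(j := a j - 1))(j := (a(j := a j - 1)) j + 1), insert j s - {j}) x)
         = of_nat (a j) * fm"
    proof (cases "a j = 0")
      case True then show ?thesis by simp
    next
      case False
      then have "(a(j := a j - 1))(j := (a(j := a j - 1)) j + 1) = a" by auto
      moreover have "insert j s - {j} = s" using js by auto
      ultimately show ?thesis unfolding fm_def eps_insert_self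
        by (simp add: mult.assoc[symmetric]; simp add: mult.commute mult.left_commute)
    qed
    have e3: "(of_nat (a j) * eps s j) * (\<Sum>i\<in>s. eps (insert j s) i * F i j) = (\<Sum>i\<in>s. A j i)"
      unfolding A_def sum_distrib_left by (intro sum.cong refl) (simp add: algebra_simps)
    show ?thesis unfolding e1 distrib_left e2 e3 ..
  qed
  have DK1: "dext n (kappa (fmono (a, s))) = (\<lambda>x. \<Sum>i\<in>s. eps s i * dext n (fmono (a(i := a i + 1), s - {i})) x)"
    unfolding kappa_fmono[of a s] by (rule lin_sum[OF lin_dext fin]) simp
  have DK2: "eps s i * dext n (fmono (a(i := a i + 1), s - {i})) x = (of_nat (a i) + 1) * fm + (\<Sum>j\<in>?N. B i j)"
    if i: "i \<in> s" for i
  proof -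
    have e0: "{1..n} - (s - {i}) = insert i ?N" using i s by auto
    have iN: "i \<notin> ?N" using i by simp
    have "dext n (fmono (a(i := a i + 1), s - {i})) x
       = (of_nat ((a(i := a i + 1)) i) * eps (s - {i}) i) * fmono ((a(i := a i + 1))(i := (a(i := a i + 1)) i - 1), insert i (s - {i})) x
         + (\<Sum>j\<in>?N. (of_nat ((a(i := a i + 1)) j) * eps (s - {i}) j) * fmono ((a(i := a i + 1))(j := (a(i := a i + 1)) j - 1), insert j (s - {i})) x)"
      unfolding dext_fmono e0 using iN by (simp add: sum.insert)
    also have "(\<Sum>j\<in>?N. (of_nat ((a(i := a i + 1)) j) * eps (s - {i}) j) * fmono ((a(i := a i + 1))(j := (a(i := a i + 1)) j - 1), insert j (s - {i})) x)
       = (\<Sum>j\<in>?N. (of_nat (a j) * eps (s - {i}) j) * F i j)"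
    proof (intro sum.cong refl)
      fix j assume j: "j \<in> ?N"
      then have ij: "i \<noteq> j" using i by auto
      have "(a(i := a i + 1))(j := (a(i := a i + 1)) j - 1) = a(j := a j - 1, i := a i + 1)"
        using ij by (auto simp: fun_upd_twist)
      moreover have "insert j (s - {i}) = insert j s - {i}" using ij by auto
      moreover have "(a(i := a i + 1)) j = a j" using ij by simp
      ultimately show "(of_nat ((a(i := a i + 1)) j) * eps (s - {i}) j) * fmono ((a(i := a i + 1))(j := (a(i := a i + 1)) j - 1), insert j (s - {i})) x
         = (of_nat (a j) * eps (s - {i}) j) * F i j" unfolding F_def by simp
    qed
    also have "(a(i := a i + 1))(i := (a(i := a i + 1)) i - 1) = a" by simp
    also have "insert i (s - {i}) = s" using i by auto
    finally have e1: "dext n (fmono (a(i := a i + 1), s - {i})) x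
       = (of_nat ((a(i := a i + 1)) i) * eps (s - {i}) i) * fm + (\<Sum>j\<in>?N. (of_nat (a j) * eps (s - {i}) j) * F i j)"
      unfolding fm_def .
    have e2: "eps s i * ((of_nat ((a(i := a i + 1)) i) * eps (s - {i}) i) * fm) = (of_nat (a i) + 1) * fm"
      unfolding eps_remove_self by (simp add: mult.assoc[symmetric]; simp add: mult.commute mult.left_commute)
    have e3: "eps s i * (\<Sum>j\<in>?N. (of_nat (a j) * eps (s - {i}) j) * F i j) = (\<Sum>j\<in>?N. B i j)"
      unfolding B_def sum_distrib_left by (intro sum.cong refl) (simp add: algebra_simps)
    show ?thesis unfolding e1 distrib_left e2 e3 ..
  qed
  have cross: "(\<Sum>j\<in>?N. \<Sum>i\<in>s. A j i) + (\<Sum>i\<in>s. \<Sum>j\<in>?N. B i j) = 0"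
  proof -
    have "(\<Sum>j\<in>?N. \<Sum>i\<in>s. A j i) = (\<Sum>i\<in>s. \<Sum>j\<in>?N. A j i)" by (rule sum.swap)
    also have "\<dots> = (\<Sum>i\<in>s. \<Sum>j\<in>?N. - B i j)"
    proof (intro sum.cong refl)
      fix i j assume i: "i \<in> s" and j: "j \<in> ?N"
      have "eps s j * eps (insert j s) i = - (eps s i * eps (s - {i}) j)"
        using eps_cross[OF fin i] j by simp
      then show "A j i = - B i j" unfolding A_def B_def by simp
    qed
    finally show ?thesis by (simp add: sum_negf)
  qed
  have tot: "(\<Sum>j\<in>?N. real (a j)) + (\<Sum>i\<in>s. (real (a i) + 1)) = real (\<Sum>i\<in>{1..n}. a i) + real (card s)"
  proof -
    have "(\<Sum>i\<in>{1..n}. a i) = (\<Sum>j\<in>?N. a j) + (\<Sum>i\<in>s. a i)"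
      using sum.subset_diff[OF s, of a] by simp
    then show ?thesis by (simp add: sum.distrib)
  qed
  have "fadd (kappa (dext n (fmono (a, s)))) (dext n (kappa (fmono (a, s)))) x
     = (\<Sum>j\<in>?N. of_nat (a j) * fm + (\<Sum>i\<in>s. A j i)) + (\<Sum>i\<in>s. (of_nat (a i) + 1) * fm + (\<Sum>j\<in>?N. B i j))"
    unfolding fadd_def KD1 DK1 using KD2 DK2 by simp
  also have "\<dots> = ((\<Sum>j\<in>?N. real (a j)) + (\<Sum>i\<in>s. (real (a i) + 1))) * fm
       + ((\<Sum>j\<in>?N. \<Sum>i\<in>s. A j i) + (\<Sum>i\<in>s. \<Sum>j\<in>?N. B i j))"
    by (simp add: sum.distrib sum_distrib_right sum_distrib_left algebra_simps)
  also have "\<dots> = (real (\<Sum>i\<in>{1..n}. a i) + real (card s)) * fm"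
    unfolding cross tot by simp
  finally show "fadd (kappa (dext n (fmono (a, s)))) (dext n (kappa (fmono (a, s)))) x
       = scal (real (\<Sum>i\<in>{1..n}. a i) + real (card s)) (fmono (a, s)) x"
    unfolding scal_def fm_def .
qed



lemma fmonosD: assumes "(a, s) \<in> fmonos n p k"
  shows "s \<subseteq> {1..n}" "\<forall>i. a i \<noteq> 0 \<longrightarrow> i \<in> {1..n}" "(\<Sum>i\<in>{1..n}. a i) = p" "int (card s) = k" "finite s"
  using assms unfolding fmonos_def by (auto intro: finite_subset)

lemma sum_upd: assumes "finite N" "j \<in> N"
  shows "(\<Sum>i\<in>N. (a(j := v)) i) + a j = (\<Sum>i\<in>N. a i) + (v::nat)"
proof -
  have 1: "(\<Sum>i\<in>N. (a(j := v)) i) = v + (\<Sum>i\<in>N - {j}. (a(j := v)) i)" using sum.remove[OF assms, of "a(j := v)"] by simp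
  have 2: "(\<Sum>i\<in>N. a i) = a j + (\<Sum>i\<in>N - {j}. a i)" using sum.remove[OF assms, of a] by simp
  have 3: "(\<Sum>i\<in>N - {j}. (a(j := v)) i) = (\<Sum>i\<in>N - {j}. a i)" by (intro sum.cong) auto
  show ?thesis unfolding 1 2 3 by simp
qed

lemma fs_fmono_img: "\<forall>g\<in>fmono ` M. fs g" by simp

lemma HH_sub: "sub (HH n p k)" unfolding HH_def by (rule span_sub) simp
lemma HHl_sub: "sub (HHl n p l k)" unfolding HHl_def by (rule span_sub) simp

lemma fmono_HH: "m \<in> fmonos n p k \<Longrightarrow> fmono m \<in> HH n p k"
  unfolding HH_def by (rule span_inc) simp

lemma span_mono: assumes "G \<subseteq> G'" "\<forall>g\<in>G'. fs g" shows "lin_span G \<subseteq> lin_span G'"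
proof (rule span_least)
  show "sub (lin_span G')" using assms(2) by (rule span_sub)
  show "G \<subseteq> lin_span G'" using assms(1) span_inc by blast
qed

lemma HHl_HH: "HHl n p l k \<subseteq> HH n p k"
  unfolding HHl_def HH_def by (rule span_mono) auto

lemma HHl_mono: "l' \<le> l \<Longrightarrow> HHl n p l k \<subseteq> HHl n p l' k"
  unfolding HHl_def by (rule span_mono) auto

lemma kappa_fmono_HH: assumes m: "m \<in> fmonos n p k" shows "kappa (fmono m) \<in> HH n (p + 1) (k - 1)"
proof -
  obtain a s where ms: "m = (a, s)" by (cases m)
  note F = fmonosD[OF m[unfolded ms]]
  show ?thesis unfolding ms kappa_fmono
  proof (rule sub_comb[OF HH_sub F(5)], intro ballI impI)
    fix j assume j: "j \<in> s"
    have jN: "j \<in> {1..n}" using j F(1) by blast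
    have "(a(j := a j + 1), s - {j}) \<in> fmonos n (p + 1) (k - 1)"
      unfolding fmonos_def
    proof (intro CollectI case_prodI conjI allI impI)
      fix i assume "(a(j := a j + 1)) i \<noteq> 0" then show "i \<in> {1..n}" using F(2) jN by (cases "i = j") auto
    next
      show "s - {j} \<subseteq> {1..n}" using F(1) by blast
    next
      have "card s \<ge> 1" using j F(5) by (metis One_nat_def Suc_leI card_gt_0_iff empty_iff)
      then show "int (card (s - {j})) = k - 1" using F(4,5) j by (simp add: of_nat_diff)
    next
      show "(\<Sum>i\<in>{1..n}. (a(j := a j + 1)) i) = p + 1" using sum_upd[of "{1..n}" j a "a j + 1"] jN F(3) by simp
    qed
    then show "fmono (a(j := a j + 1), s - {j}) \<in> HH n (p + 1) (k - 1)" by (rule fmono_HH)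
  qed
qed

lemma dext_fmono_HH: assumes m: "m \<in> fmonos n p k" shows "dext n (fmono m) \<in> HH n (p - 1) (k + 1)"
proof -
  obtain a s where ms: "m = (a, s)" by (cases m)
  note F = fmonosD[OF m[unfolded ms]]
  show ?thesis unfolding ms dext_fmono
  proof (rule sub_comb[OF HH_sub], simp, intro ballI impI)
    fix j assume j: "j \<in> {1..n} - s" and c: "real (a j) * eps s j \<noteq> 0"
    have jN: "j \<in> {1..n}" "j \<notin> s" using j by auto
    have aj: "a j \<ge> 1" using c by (cases "a j") auto
    have "(a(j := a j - 1), insert j s) \<in> fmonos n (p - 1) (k + 1)"
      unfolding fmonos_def
    proof (intro CollectI case_prodI conjI allI impI)
      fix i assume "(a(j := a j - 1)) i \<noteq> 0" then show "i \<in> {1..n}" using F(2) jN by (cases "i = j") auto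
    next
      show "insert j s \<subseteq> {1..n}" using F(1) jN by blast
    next
      show "int (card (insert j s)) = k + 1" using F(4,5) jN by simp
    next
      have "(\<Sum>i\<in>{1..n}. (a(j := a j - 1)) i) + a j = p + (a j - 1)"
        using sum_upd[of "{1..n}" j a "a j - 1"] jN F(3) by simp
      then show "(\<Sum>i\<in>{1..n}. (a(j := a j - 1)) i) = p - 1" using aj by linarith
    qed
    then show "fmono (a(j := a j - 1), insert j s) \<in> HH n (p - 1) (k + 1)" by (rule fmono_HH)
  qed
qed

lemma kappa_HH: assumes w: "w \<in> HH n p k" shows "kappa w \<in> HH n (p + 1) (k - 1)"
proof -
  have g: "\<forall>g\<in>fmono ` fmonos n p k. kappa g \<in> HH n (p + 1) (k - 1)"
  proof
    fix g assume "g \<in> fmono ` fmonos n p k"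
    then obtain m where "m \<in> fmonos n p k" "g = fmono m" by blast
    then show "kappa g \<in> HH n (p + 1) (k - 1)" using kappa_fmono_HH[of m] by simp
  qed
  have "w \<in> lin_span (fmono ` fmonos n p k)" using w by (simp only: HH_def)
  then show ?thesis by (rule image_span[OF lin_kappa HH_sub fs_fmono_img g])
qed

lemma dext_HH: assumes w: "w \<in> HH n p k" shows "dext n w \<in> HH n (p - 1) (k + 1)"
proof -
  have g: "\<forall>g\<in>fmono ` fmonos n p k. dext n g \<in> HH n (p - 1) (k + 1)"
  proof
    fix g assume "g \<in> fmono ` fmonos n p k"
    then obtain m where "m \<in> fmonos n p k" "g = fmono m" by blast
    then show "dext n g \<in> HH n (p - 1) (k + 1)" using dext_fmono_HH[of m] by simp
  qed
  have "w \<in> lin_span (fmono ` fmonos n p k)" using w by (simp only: HH_def)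
  then show ?thesis by (rule image_span[OF lin_dext HH_sub fs_fmono_img g])
qed

lemma lin_kd: "lin (\<lambda>w. fadd (kappa (dext n w)) (dext n (kappa w)))"
  by (rule lin_plus[OF lin_comp[OF lin_kappa lin_dext] lin_comp[OF lin_dext lin_kappa]])

lemma htpy_HH: assumes w: "w \<in> HH n p k"
  shows "fadd (kappa (dext n w)) (dext n (kappa w)) = scal (real p + of_int k) w"
proof -
  have "\<forall>g\<in>fmono ` fmonos n p k. fadd (kappa (dext n g)) (dext n (kappa g)) = scal (real p + of_int k) g"
  proof
    fix g assume "g \<in> fmono ` fmonos n p k"
    then obtain m where m0: "m \<in> fmonos n p k" "g = fmono m" by blast
    obtain a s where ms: "m = (a, s)" by (cases m)
    have g: "g = fmono (a, s)" and m: "(a, s) \<in> fmonos n p k" using m0 ms by simp_all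
    note F = fmonosD[OF m]
    have "(of_int (int (card s)) :: real) = of_int k" using F(4) by simp
    then have "real (card s) = of_int k" by simp
    then show "fadd (kappa (dext n g)) (dext n (kappa g)) = scal (real p + of_int k) g"
      unfolding g htpy_mono[OF F(1)] F(3) by simp
  qed
  moreover have "w \<in> lin_span (fmono ` fmonos n p k)" using w by (simp only: HH_def)
  ultimately show ?thesis by (rule eq_span[OF lin_kd lin_scalmap fs_fmono_img])
qed

lemma kk_HH: assumes w: "w \<in> HH n p k" shows "kappa (kappa w) = fzero"
proof -
  have "\<forall>g\<in>fmono ` fmonos n p k. kappa (kappa g) = fzero"
  proof
    fix g assume "g \<in> fmono ` fmonos n p k"
    then obtain m where m0: "m \<in> fmonos n p k" "g = fmono m" by blast
    obtain a s where ms: "m = (a, s)" by (cases m)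
    have g: "g = fmono (a, s)" and m: "(a, s) \<in> fmonos n p k" using m0 ms by simp_all
    show "kappa (kappa g) = fzero" unfolding g by (rule kk_mono[OF fmonosD(5)[OF m]])
  qed
  moreover have "w \<in> lin_span (fmono ` fmonos n p k)" using w by (simp only: HH_def)
  ultimately show ?thesis by (rule eq_span[OF lin_comp[OF lin_kappa lin_kappa] lin_zeromap fs_fmono_img])
qed

lemma dd_HH: assumes w: "w \<in> HH n p k" shows "dext n (dext n w) = fzero"
proof -
  have "\<forall>g\<in>fmono ` fmonos n p k. dext n (dext n g) = fzero"
  proof
    fix g assume "g \<in> fmono ` fmonos n p k"
    then obtain m where m0: "m \<in> fmonos n p k" "g = fmono m" by blast
    obtain a s where ms: "m = (a, s)" by (cases m)
    have g: "g = fmono (a, s)" and m: "(a, s) \<in> fmonos n p k" using m0 ms by simp_all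
    show "dext n (dext n g) = fzero" unfolding g by (rule dd_mono[OF fmonosD(5)[OF m]])
  qed
  moreover have "w \<in> lin_span (fmono ` fmonos n p k)" using w by (simp only: HH_def)
  ultimately show ?thesis by (rule eq_span[OF lin_comp[OF lin_dext lin_dext] lin_zeromap fs_fmono_img])
qed



lemma fs_HH: "w \<in> HH n p k \<Longrightarrow> fs w" using sub_fs[OF HH_sub] .
lemma fs_HHl: "w \<in> HHl n p l k \<Longrightarrow> fs w" using sub_fs[OF HHl_sub] .

lemma PP_gen_fs: "\<forall>g\<in>(\<Union>j\<in>{0..r}. HH n j k). fs g"
proof
  fix g assume "g \<in> (\<Union>j\<in>{0..r}. HH n j k)"
  then obtain j where "g \<in> HH n j k" by blast
  then show "fs g" by (rule fs_HH)
qed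

lemma JJ_gen: assumes "g \<in> (\<Union>l\<in>{1..}. kappa ` HHl n (r + l - 1) l (k + 1))"
  obtains l h where "1 \<le> l" "h \<in> HHl n (r + l - 1) l (k + 1)" "g = kappa h"
  using assms by blast

lemma JJ_gen_fs: "\<forall>g\<in>(\<Union>l\<in>{1..}. kappa ` HHl n (r + l - 1) l (k + 1)). fs g"
proof
  fix g assume "g \<in> (\<Union>l\<in>{1..}. kappa ` HHl n (r + l - 1) l (k + 1))"
  then obtain l h where "h \<in> HHl n (r + l - 1) l (k + 1)" "g = kappa h" by (rule JJ_gen)
  then show "fs g" using lin_fs[OF lin_kappa fs_HHl] by simp
qed

lemma PP_sub: "sub (PP n r k)" unfolding PP_def by (rule span_sub[OF PP_gen_fs])
lemma JJ_sub: "sub (JJ n r k)" unfolding JJ_def by (rule span_sub[OF JJ_gen_fs])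
lemma dJJ_sub: "sub (dext n ` JJ n r k)" by (rule sub_image[OF lin_dext JJ_sub])
lemma SS_sub: "sub (SS n r k)" unfolding SS_def by (rule ssum_sub[OF ssum_sub[OF PP_sub JJ_sub] dJJ_sub])
lemma kSS_sub: "sub (kappa ` SS n r k)" by (rule sub_image[OF lin_kappa SS_sub])
lemma dSS_sub: "sub (dext n ` SS n r k)" by (rule sub_image[OF lin_dext SS_sub])
lemma SSm_sub: "sub (SSm n r k)" unfolding SSm_def by (rule ssum_sub[OF SS_sub kSS_sub])

lemma HH_PP: assumes "j \<le> r" "w \<in> HH n j k" shows "w \<in> PP n r k"
proof -
  have "w \<in> (\<Union>j\<in>{0..r}. HH n j k)" using assms by auto
  then show ?thesis unfolding PP_def by (rule span_inc)
qed

lemma PP_SS: "PP n r k \<subseteq> SS n r k"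
proof -
  have "PP n r k \<subseteq> PP n r k \<oplus>\<^sub>f JJ n r k" by (rule ssum_inc1[OF sub_zero[OF JJ_sub]])
  also have "\<dots> \<subseteq> SS n r k" unfolding SS_def by (rule ssum_inc1[OF sub_zero[OF dJJ_sub]])
  finally show ?thesis .
qed

lemma JJ_SS: "JJ n r k \<subseteq> SS n r k"
proof -
  have "JJ n r k \<subseteq> PP n r k \<oplus>\<^sub>f JJ n r k" by (rule ssum_inc2[OF sub_zero[OF PP_sub]])
  also have "\<dots> \<subseteq> SS n r k" unfolding SS_def by (rule ssum_inc1[OF sub_zero[OF dJJ_sub]])
  finally show ?thesis .
qed

lemma dJJ_SS: "dext n ` JJ n (r + 1) (k - 1) \<subseteq> SS n r k"
  unfolding SS_def by (rule ssum_inc2[OF sub_zero[OF ssum_sub[OF PP_sub JJ_sub]]])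

lemma HH_SS: "j \<le> r \<Longrightarrow> w \<in> HH n j k \<Longrightarrow> w \<in> SS n r k"
  using HH_PP PP_SS by blast

lemma kH_JJ: assumes "1 \<le> l" "h \<in> HHl n (r + l - 1) l (k + 1)" shows "kappa h \<in> JJ n r k"
proof -
  have "kappa h \<in> (\<Union>l\<in>{1..}. kappa ` HHl n (r + l - 1) l (k + 1))" using assms by blast
  then show ?thesis unfolding JJ_def by (rule span_inc)
qed

lemma JJ_gen_HH: assumes "g \<in> (\<Union>l\<in>{1..}. kappa ` HHl n (r + l - 1) l (k + 1))"
  shows "\<exists>q. g \<in> HH n q k"
proof -
  obtain l h where "h \<in> HHl n (r + l - 1) l (k + 1)" "g = kappa h" using assms by (rule JJ_gen)
  then have "g \<in> HH n (r + l - 1 + 1) (k + 1 - 1)" using kappa_HH HHl_HH by blast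
  then show ?thesis by auto
qed

lemma kk_JJ: assumes "w \<in> JJ n r k" shows "kappa (kappa w) = fzero"
proof -
  have "\<forall>g\<in>(\<Union>l\<in>{1..}. kappa ` HHl n (r + l - 1) l (k + 1)). kappa (kappa g) = fzero"
  proof
    fix g assume "g \<in> (\<Union>l\<in>{1..}. kappa ` HHl n (r + l - 1) l (k + 1))"
    then obtain q where "g \<in> HH n q k" using JJ_gen_HH by blast
    then show "kappa (kappa g) = fzero" by (rule kk_HH)
  qed
  moreover have "w \<in> lin_span (\<Union>l\<in>{1..}. kappa ` HHl n (r + l - 1) l (k + 1))" using assms by (simp only: JJ_def)
  ultimately show ?thesis by (rule eq_span[OF lin_comp[OF lin_kappa lin_kappa] lin_zeromap JJ_gen_fs])
qed

lemma dd_JJ: assumes "w \<in> JJ n r k" shows "dext n (dext n w) = fzero"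
proof -
  have "\<forall>g\<in>(\<Union>l\<in>{1..}. kappa ` HHl n (r + l - 1) l (k + 1)). dext n (dext n g) = fzero"
  proof
    fix g assume "g \<in> (\<Union>l\<in>{1..}. kappa ` HHl n (r + l - 1) l (k + 1))"
    then obtain q where "g \<in> HH n q k" using JJ_gen_HH by blast
    then show "dext n (dext n g) = fzero" by (rule dd_HH)
  qed
  moreover have "w \<in> lin_span (\<Union>l\<in>{1..}. kappa ` HHl n (r + l - 1) l (k + 1))" using assms by (simp only: JJ_def)
  ultimately show ?thesis by (rule eq_span[OF lin_comp[OF lin_dext lin_dext] lin_zeromap JJ_gen_fs])
qed

lemma kdk_HH: assumes h: "h \<in> HH n p k"
  shows "kappa (dext n (kappa h)) = scal (real p + of_int k) (kappa h)"
proof -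
  have e: "fadd (kappa (dext n h)) (dext n (kappa h)) = scal (real p + of_int k) h" by (rule htpy_HH[OF h])
  have dh: "dext n h \<in> HH n (p - 1) (k + 1)" by (rule dext_HH[OF h])
  have fs1: "fs (kappa (dext n h))" using lin_fs[OF lin_kappa fs_HH[OF dh]] .
  have fs2: "fs (dext n (kappa h))" using lin_fs[OF lin_dext lin_fs[OF lin_kappa fs_HH[OF h]]] .
  have "kappa (fadd (kappa (dext n h)) (dext n (kappa h))) = fadd (kappa (kappa (dext n h))) (kappa (dext n (kappa h)))"
    by (rule lin_add[OF lin_kappa fs1 fs2])
  also have "kappa (kappa (dext n h)) = fzero" by (rule kk_HH[OF dh])
  finally have "kappa (fadd (kappa (dext n h)) (dext n (kappa h))) = kappa (dext n (kappa h))" by simp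
  moreover have "kappa (scal (real p + of_int k) h) = scal (real p + of_int k) (kappa h)"
    by (rule lin_scal[OF lin_kappa fs_HH[OF h]])
  ultimately show ?thesis unfolding e by simp
qed

lemma scal_inv: "c \<noteq> 0 \<Longrightarrow> scal (1 / c) (scal c w) = w"
  unfolding scal_def by (rule ext) simp



lemma incl1:
  assumes r: "r = Suc q"
  shows "SSm n r k \<oplus>\<^sub>f dext n ` SS n (r + 1) (k - 1) \<subseteq> SS n r k"
proof -
  let ?T = "SS n r k"
  have T: "sub ?T" by (rule SS_sub)
  have rq: "r - 1 = q" using r by simp
  have a1: "PP n q k \<subseteq> ?T"
  proof -
    have "PP n q k \<subseteq> PP n r k" unfolding PP_def
      by (rule span_mono) (use r in \<open>force\<close>, rule PP_gen_fs)
    then show ?thesis using PP_SS by blast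
  qed
  have a2: "JJ n q k \<subseteq> ?T" unfolding JJ_def[of n q k]
  proof (rule span_least[OF T], rule subsetI)
    fix g assume "g \<in> (\<Union>l\<in>{1..}. kappa ` HHl n (q + l - 1) l (k + 1))"
    then obtain l h where l: "1 \<le> l" and h: "h \<in> HHl n (q + l - 1) l (k + 1)" and g: "g = kappa h" by (rule JJ_gen)
    show "g \<in> ?T"
    proof (cases "l = 1")
      case True
      then have "h \<in> HH n q (k + 1)" using subsetD[OF HHl_HH h] by simp
      then have "kappa h \<in> HH n (q + 1) (k + 1 - 1)" by (rule kappa_HH)
      then have "kappa h \<in> HH n r k" using r by simp
      then show ?thesis unfolding g by (rule HH_SS[OF order_refl])
    next
      case False
      then have "h \<in> HHl n (r + (l - 1) - 1) (l - 1) (k + 1)"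
        using h HHl_mono[of "l - 1" l] r l by (auto simp: Suc_diff_le)
      moreover have "1 \<le> l - 1" using False l by simp
      ultimately have "kappa h \<in> JJ n r k" using kH_JJ by blast
      then show ?thesis unfolding g using JJ_SS by blast
    qed
  qed
  have a3: "dext n ` JJ n (q + 1) (k - 1) \<subseteq> ?T"
  proof
    fix y assume "y \<in> dext n ` JJ n (q + 1) (k - 1)"
    then obtain w where w: "w \<in> JJ n r (k - 1)" and y: "y = dext n w" using r by auto
    have gens: "\<forall>g\<in>(\<Union>l\<in>{1..}. kappa ` HHl n (r + l - 1) l (k - 1 + 1)). dext n g \<in> ?T"
    proof
      fix g assume "g \<in> (\<Union>l\<in>{1..}. kappa ` HHl n (r + l - 1) l (k - 1 + 1))"
      then obtain l h where l: "1 \<le> l" and h: "h \<in> HHl n (r + l - 1) l (k - 1 + 1)" and g: "g = kappa h" by (rule JJ_gen)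
      show "dext n g \<in> ?T"
      proof (cases "l = 1")
        case True
        then have "h \<in> HH n r k" using subsetD[OF HHl_HH h] by simp
        then have "kappa h \<in> HH n (r + 1) (k - 1)" by (rule kappa_HH)
        then have "dext n (kappa h) \<in> HH n (r + 1 - 1) (k - 1 + 1)" by (rule dext_HH)
        then have "dext n (kappa h) \<in> HH n r k" by simp
        then show ?thesis unfolding g by (rule HH_SS[OF order_refl])
      next
        case False
        then have "h \<in> HHl n ((r + 1) + (l - 1) - 1) (l - 1) (k - 1 + 1)"
          using h HHl_mono[of "l - 1" l] l by (auto simp: Suc_diff_le)
        moreover have "1 \<le> l - 1" using False l by simp
        ultimately have "kappa h \<in> JJ n (r + 1) (k - 1)" using kH_JJ by blast
        then show ?thesis unfolding g using dJJ_SS by blast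
      qed
    qed
    have "w \<in> lin_span (\<Union>l\<in>{1..}. kappa ` HHl n (r + l - 1) l (k - 1 + 1))" using w by (simp only: JJ_def)
    then show "y \<in> ?T" unfolding y by (rule image_span[OF lin_dext T JJ_gen_fs gens])
  qed
  have A: "SS n q k \<subseteq> ?T" unfolding SS_def[of n q k]
    by (rule ssum_least[OF T ssum_least[OF T a1 a2] a3])
  have b1: "\<forall>b\<in>PP n q (k + 1). kappa b \<in> ?T"
  proof
    fix b assume b: "b \<in> PP n q (k + 1)"
    have gens: "\<forall>g\<in>(\<Union>j\<in>{0..q}. HH n j (k + 1)). kappa g \<in> ?T"
    proof
      fix g assume "g \<in> (\<Union>j\<in>{0..q}. HH n j (k + 1))"
      then obtain j where j: "j \<le> q" and g: "g \<in> HH n j (k + 1)" by auto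
      have "kappa g \<in> HH n (j + 1) (k + 1 - 1)" by (rule kappa_HH[OF g])
      then have "kappa g \<in> HH n (j + 1) k" by simp
      moreover have "j + 1 \<le> r" using j r by simp
      ultimately show "kappa g \<in> ?T" using HH_SS by blast
    qed
    have "b \<in> lin_span (\<Union>j\<in>{0..q}. HH n j (k + 1))" using b by (simp only: PP_def)
    then show "kappa b \<in> ?T" by (rule image_span[OF lin_kappa T PP_gen_fs gens])
  qed
  have b2: "\<forall>b\<in>JJ n q (k + 1). kappa b \<in> ?T"
  proof
    fix b assume b: "b \<in> JJ n q (k + 1)"
    have gens: "\<forall>g\<in>(\<Union>l\<in>{1..}. kappa ` HHl n (q + l - 1) l (k + 1 + 1)). kappa g \<in> ?T"
    proof
      fix g assume "g \<in> (\<Union>l\<in>{1..}. kappa ` HHl n (q + l - 1) l (k + 1 + 1))"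
      then obtain l h where h: "h \<in> HHl n (q + l - 1) l (k + 1 + 1)" and g: "g = kappa h" by (rule JJ_gen)
      have "h \<in> HH n (q + l - 1) (k + 1 + 1)" using subsetD[OF HHl_HH h] by simp
      then have "kappa g = fzero" unfolding g by (rule kk_HH)
      then show "kappa g \<in> ?T" using sub_zero[OF T] by simp
    qed
    have "b \<in> lin_span (\<Union>l\<in>{1..}. kappa ` HHl n (q + l - 1) l (k + 1 + 1))" using b by (simp only: JJ_def)
    then show "kappa b \<in> ?T" by (rule image_span[OF lin_kappa T JJ_gen_fs gens])
  qed
  have b3: "\<forall>b\<in>dext n ` JJ n (q + 1) (k + 1 - 1). kappa b \<in> ?T"
  proof
    fix b assume "b \<in> dext n ` JJ n (q + 1) (k + 1 - 1)"
    then obtain w where w: "w \<in> JJ n r k" and bw: "b = dext n w" using r by auto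
    have gens: "\<forall>g\<in>(\<Union>l\<in>{1..}. kappa ` HHl n (r + l - 1) l (k + 1)). kappa (dext n g) \<in> ?T"
    proof
      fix g assume "g \<in> (\<Union>l\<in>{1..}. kappa ` HHl n (r + l - 1) l (k + 1))"
      then obtain l h where l: "1 \<le> l" and h: "h \<in> HHl n (r + l - 1) l (k + 1)" and g: "g = kappa h" by (rule JJ_gen)
      have hH: "h \<in> HH n (r + l - 1) (k + 1)" using subsetD[OF HHl_HH h] by simp
      have "kappa (dext n g) = scal (real (r + l - 1) + of_int (k + 1)) (kappa h)" unfolding g by (rule kdk_HH[OF hH])
      moreover have "kappa h \<in> ?T" using kH_JJ[OF l h] JJ_SS by blast
      ultimately show "kappa (dext n g) \<in> ?T" using sub_scal[OF T] by simp
    qed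
    have "w \<in> lin_span (\<Union>l\<in>{1..}. kappa ` HHl n (r + l - 1) l (k + 1))" using w by (simp only: JJ_def)
    then show "kappa b \<in> ?T" unfolding bw
      by (rule image_span[OF lin_comp[OF lin_kappa lin_dext] T JJ_gen_fs gens])
  qed
  have B: "kappa ` SS n q (k + 1) \<subseteq> ?T"
  proof
    fix y assume "y \<in> kappa ` SS n q (k + 1)"
    then obtain b where b: "b \<in> SS n q (k + 1)" and y: "y = kappa b" by auto
    have "b \<in> (PP n q (k + 1) \<oplus>\<^sub>f JJ n q (k + 1)) \<oplus>\<^sub>f dext n ` JJ n (q + 1) (k + 1 - 1)"
      using b by (simp only: SS_def)
    moreover have "\<forall>a\<in>PP n q (k + 1) \<oplus>\<^sub>f JJ n q (k + 1). kappa a \<in> ?T"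
    proof
      fix a assume "a \<in> PP n q (k + 1) \<oplus>\<^sub>f JJ n q (k + 1)"
      then show "kappa a \<in> ?T" by (rule image_ssum[OF lin_kappa T PP_sub JJ_sub b1 b2])
    qed
    ultimately show "y \<in> ?T" unfolding y
      by (intro image_ssum[OF lin_kappa T ssum_sub[OF PP_sub JJ_sub] dJJ_sub _ b3])
  qed
  have c1: "\<forall>b\<in>PP n (r + 1) (k - 1). dext n b \<in> ?T"
  proof
    fix b assume b: "b \<in> PP n (r + 1) (k - 1)"
    have gens: "\<forall>g\<in>(\<Union>j\<in>{0..r + 1}. HH n j (k - 1)). dext n g \<in> ?T"
    proof
      fix g assume "g \<in> (\<Union>j\<in>{0..r + 1}. HH n j (k - 1))"
      then obtain j where j: "j \<le> r + 1" and g: "g \<in> HH n j (k - 1)" by auto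
      have "dext n g \<in> HH n (j - 1) (k - 1 + 1)" by (rule dext_HH[OF g])
      then have "dext n g \<in> HH n (j - 1) k" by simp
      moreover have "j - 1 \<le> r" using j by simp
      ultimately show "dext n g \<in> ?T" using HH_SS by blast
    qed
    have "b \<in> lin_span (\<Union>j\<in>{0..r + 1}. HH n j (k - 1))" using b by (simp only: PP_def)
    then show "dext n b \<in> ?T" by (rule image_span[OF lin_dext T PP_gen_fs gens])
  qed
  have c2: "\<forall>b\<in>JJ n (r + 1) (k - 1). dext n b \<in> ?T" using dJJ_SS by blast
  have c3: "\<forall>b\<in>dext n ` JJ n (r + 1 + 1) (k - 1 - 1). dext n b \<in> ?T"
  proof
    fix b assume "b \<in> dext n ` JJ n (r + 1 + 1) (k - 1 - 1)"
    then obtain w where w: "w \<in> JJ n (r + 1 + 1) (k - 1 - 1)" and bw: "b = dext n w" by auto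
    have "dext n b = fzero" unfolding bw by (rule dd_JJ[OF w])
    then show "dext n b \<in> ?T" using sub_zero[OF T] by simp
  qed
  have C: "dext n ` SS n (r + 1) (k - 1) \<subseteq> ?T"
  proof
    fix y assume "y \<in> dext n ` SS n (r + 1) (k - 1)"
    then obtain b where b: "b \<in> SS n (r + 1) (k - 1)" and y: "y = dext n b" by auto
    have "b \<in> (PP n (r + 1) (k - 1) \<oplus>\<^sub>f JJ n (r + 1) (k - 1)) \<oplus>\<^sub>f dext n ` JJ n (r + 1 + 1) (k - 1 - 1)"
      using b by (simp only: SS_def)
    moreover have "\<forall>a\<in>PP n (r + 1) (k - 1) \<oplus>\<^sub>f JJ n (r + 1) (k - 1). dext n a \<in> ?T"
    proof
      fix a assume "a \<in> PP n (r + 1) (k - 1) \<oplus>\<^sub>f JJ n (r + 1) (k - 1)"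
      then show "dext n a \<in> ?T" by (rule image_ssum[OF lin_dext T PP_sub JJ_sub c1 c2])
    qed
    ultimately show "y \<in> ?T" unfolding y
      by (intro image_ssum[OF lin_dext T ssum_sub[OF PP_sub JJ_sub] dJJ_sub _ c3])
  qed
  have "SSm n r k \<subseteq> ?T" unfolding SSm_def rq by (rule ssum_least[OF T A B])
  then show ?thesis by (rule ssum_least[OF T _ C])
qed



lemma incl2:
  assumes r: "r = Suc q" and k: "0 \<le> k"
  shows "SS n r k \<subseteq> SSm n r k \<oplus>\<^sub>f dext n ` SS n (r + 1) (k - 1)"
proof -
  let ?T = "SSm n r k \<oplus>\<^sub>f dext n ` SS n (r + 1) (k - 1)"
  have T: "sub ?T" by (rule ssum_sub[OF SSm_sub dSS_sub])
  have rq: "r - 1 = q" using r by simp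
  have SSm: "SSm n r k = SS n q k \<oplus>\<^sub>f kappa ` SS n q (k + 1)" unfolding SSm_def rq ..
  have X: "SS n q k \<subseteq> ?T"
  proof -
    have "SS n q k \<subseteq> SSm n r k" unfolding SSm by (rule ssum_inc1[OF sub_zero[OF kSS_sub]])
    also have "\<dots> \<subseteq> ?T" by (rule ssum_inc1[OF sub_zero[OF dSS_sub]])
    finally show ?thesis .
  qed
  have Y: "kappa ` SS n q (k + 1) \<subseteq> ?T"
  proof -
    have "kappa ` SS n q (k + 1) \<subseteq> SSm n r k" unfolding SSm by (rule ssum_inc2[OF sub_zero[OF SS_sub]])
    also have "\<dots> \<subseteq> ?T" by (rule ssum_inc1[OF sub_zero[OF dSS_sub]])
    finally show ?thesis .
  qed
  have Z: "dext n ` SS n (r + 1) (k - 1) \<subseteq> ?T" by (rule ssum_inc2[OF sub_zero[OF SSm_sub]])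
  have d1: "PP n r k \<subseteq> ?T" unfolding PP_def[of n r k]
  proof (rule span_least[OF T], rule subsetI)
    fix g assume "g \<in> (\<Union>j\<in>{0..r}. HH n j k)"
    then obtain j where j: "j \<le> r" and g: "g \<in> HH n j k" by auto
    show "g \<in> ?T"
    proof (cases "j = r")
      case False
      then have "j \<le> q" using j r by simp
      then have "g \<in> SS n q k" using HH_SS g by blast
      then show ?thesis using X by blast
    next
      case True
      have gr: "g \<in> HH n r k" using g True by simp
      have e: "fadd (kappa (dext n g)) (dext n (kappa g)) = scal (real r + of_int k) g" by (rule htpy_HH[OF gr])
      have "dext n g \<in> HH n (r - 1) (k + 1)" by (rule dext_HH[OF gr])
      then have "dext n g \<in> SS n q (k + 1)" unfolding rq using HH_SS by blast
      then have 1: "kappa (dext n g) \<in> ?T" using Y by blast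
      have "kappa g \<in> HH n (r + 1) (k - 1)" by (rule kappa_HH[OF gr])
      then have "kappa g \<in> SS n (r + 1) (k - 1)" using HH_SS by blast
      then have 2: "dext n (kappa g) \<in> ?T" using Z by blast
      have "scal (real r + of_int k) g \<in> ?T" unfolding e[symmetric] by (rule sub_add[OF T 1 2])
      then have "scal (1 / (real r + of_int k)) (scal (real r + of_int k) g) \<in> ?T" by (rule sub_scal[OF T])
      moreover have "real r + of_int k \<noteq> 0" using r k by simp
      ultimately show ?thesis using scal_inv by simp
    qed
  qed
  have d2: "JJ n r k \<subseteq> ?T" unfolding JJ_def[of n r k]
  proof (rule span_least[OF T], rule subsetI)
    fix g assume "g \<in> (\<Union>l\<in>{1..}. kappa ` HHl n (r + l - 1) l (k + 1))"
    then obtain l h where l: "1 \<le> l" and h: "h \<in> HHl n (r + l - 1) l (k + 1)" and g: "g = kappa h" by (rule JJ_gen)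
    have hH: "h \<in> HH n (r + l - 1) (k + 1)" using subsetD[OF HHl_HH h] by simp
    have e: "kappa (dext n (kappa h)) = scal (real (r + l - 1) + of_int (k + 1)) (kappa h)" by (rule kdk_HH[OF hH])
    have "kappa h \<in> JJ n (q + 1) (k + 1 - 1)" using kH_JJ[OF l h] r by simp
    then have "dext n (kappa h) \<in> SS n q (k + 1)" using dJJ_SS by blast
    then have "kappa (dext n (kappa h)) \<in> ?T" using Y by blast
    then have "scal (1 / (real (r + l - 1) + of_int (k + 1))) (scal (real (r + l - 1) + of_int (k + 1)) (kappa h)) \<in> ?T"
      unfolding e by (rule sub_scal[OF T])
    moreover have "real (r + l - 1) + of_int (k + 1) \<noteq> 0" using k by simp
    ultimately show "g \<in> ?T" unfolding g using scal_inv by simp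
  qed
  have d3: "dext n ` JJ n (r + 1) (k - 1) \<subseteq> ?T"
  proof -
    have "dext n ` JJ n (r + 1) (k - 1) \<subseteq> dext n ` SS n (r + 1) (k - 1)" using JJ_SS by blast
    then show ?thesis using Z by blast
  qed
  show ?thesis unfolding SS_def[of n r k] by (rule ssum_least[OF T ssum_least[OF T d1 d2] d3])
qed

lemma part3: assumes "1 \<le> r" "0 \<le> k"
  shows "SSm n r k \<oplus>\<^sub>f dext n ` SS n (r + 1) (k - 1) = SS n r k"
proof -
  obtain q where r: "r = Suc q" using assms(1) by (cases r) auto
  show ?thesis using incl1[OF r] incl2[OF r assms(2)] by (rule equalityI)
qed



lemma sub_single: "sub {fzero}"
  unfolding sub_def by (simp add: fadd_def fzero_def scal_def fs_def)

lemma span_empty: "lin_span {} = {fzero}"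
proof
  show "lin_span {} \<subseteq> {fzero}" by (rule span_least[OF sub_single]) simp
  show "{fzero} \<subseteq> lin_span {}" using span_zero by simp
qed

lemma fmonos_empty: assumes "k < 0 \<or> k > int n" shows "fmonos n p k = {}"
proof (rule equals0I)
  fix m assume m: "m \<in> fmonos n p k"
  obtain a s where ms: "m = (a, s)" by (cases m)
  note F = fmonosD[OF m[unfolded ms]]
  have "card s \<le> card {1..n}" using F(1) by (rule card_mono[OF finite_atLeastAtMost])
  then have "card s \<le> n" by simp
  then show False using F(4) assms by linarith
qed

lemma HH_triv: "k < 0 \<or> k > int n \<Longrightarrow> HH n p k = {fzero}"
  unfolding HH_def by (simp add: fmonos_empty span_empty)

lemma kappa_HH0: assumes w: "w \<in> HH n p 0" shows "kappa w = fzero"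
proof -
  have "\<forall>g\<in>fmono ` fmonos n p 0. kappa g = fzero"
  proof
    fix g assume "g \<in> fmono ` fmonos n p 0"
    then obtain m where m0: "m \<in> fmonos n p 0" "g = fmono m" by blast
    obtain a s where ms: "m = (a, s)" by (cases m)
    have g: "g = fmono (a, s)" and m: "(a, s) \<in> fmonos n p 0" using m0 ms by simp_all
    note F = fmonosD[OF m]
    have "s = {}" using F(4,5) by simp
    then show "kappa g = fzero" unfolding g kappa_fmono by (simp add: fzero_def)
  qed
  moreover have "w \<in> lin_span (fmono ` fmonos n p 0)" using w by (simp only: HH_def)
  ultimately show ?thesis by (rule eq_span[OF lin_kappa lin_zeromap fs_fmono_img])
qed

lemma JJ_triv: assumes k: "k < 0 \<or> k \<ge> int n" shows "JJ n p k \<subseteq> {fzero}"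
  unfolding JJ_def
proof (rule span_least[OF sub_single], rule subsetI)
  fix g assume "g \<in> (\<Union>l\<in>{1..}. kappa ` HHl n (p + l - 1) l (k + 1))"
  then obtain l h where h: "h \<in> HHl n (p + l - 1) l (k + 1)" and g: "g = kappa h" by (rule JJ_gen)
  have hH: "h \<in> HH n (p + l - 1) (k + 1)" using subsetD[OF HHl_HH h] by simp
  show "g \<in> {fzero}"
  proof (cases "k + 1 = 0")
    case True
    then have "h \<in> HH n (p + l - 1) 0" using hH by simp
    then show ?thesis unfolding g using kappa_HH0 by blast
  next
    case False
    then have "k + 1 < 0 \<or> k + 1 > int n" using k by linarith
    then have "h = fzero" using hH HH_triv by blast
    then show ?thesis unfolding g using lin_zero[OF lin_kappa] by simp
  qed
qed

lemma PP_triv: assumes "k < 0 \<or> k > int n" shows "PP n p k \<subseteq> {fzero}"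
  unfolding PP_def
proof (rule span_least[OF sub_single], rule subsetI)
  fix g assume "g \<in> (\<Union>j\<in>{0..p}. HH n j k)"
  then obtain j where "g \<in> HH n j k" by blast
  then show "g \<in> {fzero}" using HH_triv[OF assms] by blast
qed

lemma img_single: assumes "lin L" "A \<subseteq> {fzero}" "fzero \<in> A" shows "L ` A = {fzero}"
proof -
  have "A = {fzero}" using assms(2,3) by blast
  then show ?thesis using lin_zero[OF assms(1)] by simp
qed

lemma SS_triv: assumes k: "k < 0 \<or> k > int n" shows "SS n p k \<subseteq> {fzero}"
proof -
  have 1: "PP n p k \<subseteq> {fzero}" by (rule PP_triv[OF k])
  have 2: "JJ n p k \<subseteq> {fzero}" by (rule JJ_triv) (use k in linarith)
  have "JJ n (p + 1) (k - 1) \<subseteq> {fzero}" by (rule JJ_triv) (use k in linarith)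
  then have 3: "dext n ` JJ n (p + 1) (k - 1) = {fzero}"
    by (rule img_single[OF lin_dext _ sub_zero[OF JJ_sub]])
  have 4: "dext n ` JJ n (p + 1) (k - 1) \<subseteq> {fzero}" unfolding 3 ..
  show ?thesis unfolding SS_def
    by (rule ssum_least[OF sub_single ssum_least[OF sub_single 1 2] 4])
qed

theorem mainTheorem4:
  fixes n r :: nat
  assumes "1 \<le> n" and "1 \<le> r"
  shows "SSm n r 0 = SS n r 0
    \<and> SSm n r (int n) = SS n (r - 1) (int n)
    \<and> (\<forall>k::int. 0 \<le> k \<and> k \<le> int n \<longrightarrow>
           SSm n r k \<oplus>\<^sub>f dext n ` SS n (r + 1) (k - 1) = SS n r k)"
proof (intro conjI allI impI)
  have e: "dext n ` SS n (r + 1) (0 - 1) = {fzero}"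
    by (rule img_single[OF lin_dext SS_triv sub_zero[OF SS_sub]]) simp
  show "SSm n r 0 = SS n r 0" using part3[OF assms(2), of 0 n] unfolding e ssum_zero by simp
next
  have e: "kappa ` SS n (r - 1) (int n + 1) = {fzero}"
    by (rule img_single[OF lin_kappa SS_triv sub_zero[OF SS_sub]]) simp
  show "SSm n r (int n) = SS n (r - 1) (int n)" unfolding SSm_def e ssum_zero ..
next
  fix k :: int assume "0 \<le> k \<and> k \<le> int n"
  then show "SSm n r k \<oplus>\<^sub>f dext n ` SS n (r + 1) (k - 1) = SS n r k" using part3[OF assms(2)] by blast
qed

end
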